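(* Let $\omega:\Gamma^2\to\Gamma$ be a surjective group morphism. Then $G(\mathrm{ad}(h)\circ\omega)\cong G(\omega)$ for all $h\in\Gamma$.
   Context: $\mathrm{ad}(h)(g)=hgh^{-1}$. $\{0,1\}^*$ denotes the finite words over $\{0,1\}$; $\mathfrak C=\{0,1\}^{\mathbb N}$. A finite complete prefix code is a finite set $\{t_1,\dots,t_n\}\subset\{0,1\}^*$ such that every $x\in\mathfrak C$ has exactly one $t_i$ as prefix. Thompson's group $V$ is the group of homeomorphisms $v$ of $\mathfrak C$ for which there exist finite complete prefix codes $\{t_i\},\{s_i\}$ and a permutation $\sigma$ with $v(t_iw)=s_{\sigma(i)}w$. For a group morphism $\omega:\Gamma^2\to\Gamma$, $K(\omega)$ is the group of maps $a:\{0,1\}^*\to\Gamma$ (pointwise product) with $a(u)=\omega(a(u0),a(u1))$ for all $u$; $V$ acts on it by $\pi(v)(a)(s_{\sigma(i)}u)=a(t_iu)$ for all $i$, $u$ (determining $\pi(v)(a)\in K(\omega)$ uniquely); $G(\omega):=K(\omega)\rtimes V$ with $vav^{-1}=\pi(v)(a)$. *)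

theory Defs
  imports "HOL-Algebra.Group"
begin

text \<open>Finite words over {0,1} are \<open>bool list\<close> (False = 0, True = 1);
  the Cantor space is \<open>nat \<Rightarrow> bool\<close>.\<close>

definition is_prefix_of :: "bool list \<Rightarrow> (nat \<Rightarrow> bool) \<Rightarrow> bool" where
  "is_prefix_of t x \<longleftrightarrow> (\<forall>i<length t. x i = t ! i)"

definition cat :: "bool list \<Rightarrow> (nat \<Rightarrow> bool) \<Rightarrow> (nat \<Rightarrow> bool)" where
  "cat t w = (\<lambda>i. if i < length t then t ! i else w (i - length t))"

definition complete_prefix_code :: "bool list set \<Rightarrow> bool" where
  "complete_prefix_code T \<longleftrightarrow> finite T \<and> (\<forall>x. \<exists>!t. t \<in> T \<and> is_prefix_of t x)"

definition V_descr ::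
  "((nat \<Rightarrow> bool) \<Rightarrow> (nat \<Rightarrow> bool)) \<Rightarrow> bool list list \<Rightarrow> bool list list \<Rightarrow> (nat \<Rightarrow> nat) \<Rightarrow> bool" where
  "V_descr v ts ss \<sigma> \<longleftrightarrow>
     length ts = length ss \<and> distinct ts \<and> distinct ss \<and>
     complete_prefix_code (set ts) \<and> complete_prefix_code (set ss) \<and>
     bij_betw \<sigma> {..<length ts} {..<length ts} \<and>
     (\<forall>i<length ts. \<forall>w. v (cat (ts ! i) w) = cat (ss ! \<sigma> i) w)"

text \<open>Thompson's group V (its elements are homeomorphisms of the Cantor space;
  a map with such a description is automatically a homeomorphism).\<close>
definition thompsonV_set :: "((nat \<Rightarrow> bool) \<Rightarrow> (nat \<Rightarrow> bool)) set" where
  "thompsonV_set = {v. bij v \<and> (\<exists>ts ss \<sigma>. V_descr v ts ss \<sigma>)}"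

definition thompsonV :: "((nat \<Rightarrow> bool) \<Rightarrow> (nat \<Rightarrow> bool)) monoid" where
  "thompsonV = \<lparr>carrier = thompsonV_set, mult = (\<circ>), one = id\<rparr>"

definition K_set :: "('g, 'm) monoid_scheme \<Rightarrow> ('g \<times> 'g \<Rightarrow> 'g) \<Rightarrow> (bool list \<Rightarrow> 'g) set" where
  "K_set \<Gamma> \<omega> = {a. \<forall>u. a u \<in> carrier \<Gamma> \<and> a u = \<omega> (a (u @ [False]), a (u @ [True]))}"

definition K_grp :: "('g, 'm) monoid_scheme \<Rightarrow> ('g \<times> 'g \<Rightarrow> 'g) \<Rightarrow> (bool list \<Rightarrow> 'g) monoid" where
  "K_grp \<Gamma> \<omega> = \<lparr>carrier = K_set \<Gamma> \<omega>,
                  mult = (\<lambda>a b u. a u \<otimes>\<^bsub>\<Gamma>\<^esub> b u),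
                  one = (\<lambda>u. \<one>\<^bsub>\<Gamma>\<^esub>)\<rparr>"

definition V_act ::
  "('g, 'm) monoid_scheme \<Rightarrow> ('g \<times> 'g \<Rightarrow> 'g) \<Rightarrow> ((nat \<Rightarrow> bool) \<Rightarrow> (nat \<Rightarrow> bool))
     \<Rightarrow> (bool list \<Rightarrow> 'g) \<Rightarrow> (bool list \<Rightarrow> 'g)" where
  "V_act \<Gamma> \<omega> v a = (THE b. b \<in> K_set \<Gamma> \<omega> \<and>
      (\<forall>ts ss \<sigma>. V_descr v ts ss \<sigma> \<longrightarrow>
         (\<forall>i<length ts. \<forall>u. b (ss ! \<sigma> i @ u) = a (ts ! i @ u))))"

text \<open>G(\<omega>) = K(\<omega>) \<rtimes> V, with v a v\<inverse> = \<pi>(v)(a):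
  (a,v)(b,w) = (a \<cdot> \<pi>(v)(b), v \<circ> w).\<close>
definition G_grp :: "('g, 'm) monoid_scheme \<Rightarrow> ('g \<times> 'g \<Rightarrow> 'g)
     \<Rightarrow> ((bool list \<Rightarrow> 'g) \<times> ((nat \<Rightarrow> bool) \<Rightarrow> (nat \<Rightarrow> bool))) monoid" where
  "G_grp \<Gamma> \<omega> = \<lparr>carrier = K_set \<Gamma> \<omega> \<times> thompsonV_set,
                  mult = (\<lambda>(a, v) (b, w). (\<lambda>u. a u \<otimes>\<^bsub>\<Gamma>\<^esub> V_act \<Gamma> \<omega> v b u, v \<circ> w)),
                  one = (\<lambda>u. \<one>\<^bsub>\<Gamma>\<^esub>, id)\<rparr>"

definition ad :: "('g, 'm) monoid_scheme \<Rightarrow> 'g \<Rightarrow> 'g \<Rightarrow> 'g" where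
  "ad \<Gamma> h g = h \<otimes>\<^bsub>\<Gamma>\<^esub> g \<otimes>\<^bsub>\<Gamma>\<^esub> inv\<^bsub>\<Gamma>\<^esub> h"

end

theory Submission
  imports Defs
begin

definition aff :: "((nat \<Rightarrow> bool) \<Rightarrow> (nat \<Rightarrow> bool)) \<Rightarrow> bool list \<Rightarrow> bool list \<Rightarrow> bool" where
  "aff v x y \<longleftrightarrow> (\<forall>w. v (cat x w) = cat y w)"

definition good :: "((nat \<Rightarrow> bool) \<Rightarrow> (nat \<Rightarrow> bool)) \<Rightarrow> bool" where
  "good v \<longleftrightarrow> inj v \<and> (\<exists>N. \<forall>z. N \<le> length z \<longrightarrow> (\<exists>y. aff v y z \<and> length z \<le> length y + N))"

lemma cat_append: "cat (x @ r) w = cat x (cat r w)"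
  unfolding cat_def by (auto simp: nth_append fun_eq_iff)

lemma cat_inj:
  assumes "\<forall>w. cat p w = cat q w" shows "p = q"
proof -
  have len: "length p = length q"
  proof (rule ccontr)
    assume ne: "length p \<noteq> length q"
    show False
    proof (cases "length p < length q")
      case True
      define w where "w = (\<lambda>i::nat. \<not> q ! (length p + i))"
      have "cat p w (length p) = cat q w (length p)" using assms by simp
      then show False using True by (simp add: cat_def w_def)
    next
      case False
      then have lt: "length q < length p" using ne by simp
      define w where "w = (\<lambda>i::nat. \<not> p ! (length q + i))"
      have "cat p w (length q) = cat q w (length q)" using assms by simp
      then show False using lt by (simp add: cat_def w_def)
    qed
  qed
  show ?thesis
  proof (rule nth_equalityI)
    show "length p = length q" by (rule len)
    fix i assume "i < length p"
    have "cat p (\<lambda>_. False) i = cat q (\<lambda>_. False) i" using assms by simp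
    then show "p ! i = q ! i" using \<open>i < length p\<close> len by (simp add: cat_def)
  qed
qed

lemma aff_app: "aff v x y \<Longrightarrow> aff v (x @ r) (y @ r)"
  unfolding aff_def by (simp add: cat_append)

lemma aff_comp: "aff w x y \<Longrightarrow> aff v y z \<Longrightarrow> aff (v \<circ> w) x z"
  unfolding aff_def by simp

lemma aff_uniq_pre: "inj v \<Longrightarrow> aff v x y \<Longrightarrow> aff v x' y \<Longrightarrow> x = x'"
  unfolding aff_def by (metis cat_inj injD)

lemma good_comp: assumes "good v" "good w" shows "good (v \<circ> w)"
proof -
  obtain Nv where Nv: "\<forall>z. Nv \<le> length z \<longrightarrow> (\<exists>y. aff v y z \<and> length z \<le> length y + Nv)"
    using assms(1) good_def by blast
  obtain Nw where Nw: "\<forall>z. Nw \<le> length z \<longrightarrow> (\<exists>y. aff w y z \<and> length z \<le> length y + Nw)"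
    using assms(2) good_def by blast
  have "\<forall>z. Nv + Nw \<le> length z \<longrightarrow> (\<exists>x. aff (v \<circ> w) x z \<and> length z \<le> length x + (Nv + Nw))"
  proof (intro allI impI)
    fix z :: "bool list" assume z: "Nv + Nw \<le> length z"
    then obtain y where y: "aff v y z" "length z \<le> length y + Nv" using Nv by force
    then have "Nw \<le> length y" using z by simp
    then obtain x where x: "aff w x y" "length y \<le> length x + Nw" using Nw by blast
    show "\<exists>x. aff (v \<circ> w) x z \<and> length z \<le> length x + (Nv + Nw)"
      using aff_comp[OF x(1) y(1)] x(2) y(2) by auto
  qed
  moreover have "inj (v \<circ> w)" using assms unfolding good_def by (simp add: inj_compose)
  ultimately show ?thesis unfolding good_def by blast
qed

lemma code_prefix:
  assumes "complete_prefix_code T" "\<forall>t\<in>T. length t \<le> length z"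
  shows "\<exists>t\<in>T. \<exists>r. z = t @ r"
proof -
  obtain t where t: "t \<in> T" "is_prefix_of t (cat z (\<lambda>_. False))"
    using assms(1) unfolding complete_prefix_code_def by blast
  have lt: "length t \<le> length z" using assms(2) t(1) by blast
  have "take (length t) z = t"
    by (rule nth_equalityI) (use t(2) lt in \<open>auto simp: is_prefix_of_def cat_def\<close>)
  then have "z = t @ drop (length t) z" by (metis append_take_drop_id)
  then show ?thesis using t(1) by blast
qed

lemma V_good: assumes "v \<in> thompsonV_set" shows "good v"
proof -
  obtain ts ss \<sigma> where D: "V_descr v ts ss \<sigma>" and bij: "bij v"
    using assms unfolding thompsonV_set_def by blast
  define N where "N = Max (length ` set ss)"
  have "\<forall>z. N \<le> length z \<longrightarrow> (\<exists>y. aff v y z \<and> length z \<le> length y + N)"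
  proof (intro allI impI)
    fix z :: "bool list" assume z: "N \<le> length z"
    have "\<forall>t\<in>set ss. length t \<le> length z"
      using z unfolding N_def by (meson Max_ge List.finite_set finite_imageI image_eqI le_trans)
    then obtain s r where s: "s \<in> set ss" "z = s @ r"
      using code_prefix D unfolding V_descr_def by blast
    obtain j where j: "j < length ss" "ss ! j = s" using s(1) by (meson in_set_conv_nth)
    have "j \<in> \<sigma> ` {..<length ts}" using D j unfolding V_descr_def bij_betw_def by auto
    then obtain i where i: "i < length ts" "\<sigma> i = j" by auto
    have "aff v (ts ! i) s" using D i j unfolding V_descr_def aff_def by auto
    then have "aff v (ts ! i @ r) z" using s(2) aff_app by blast
    moreover have "length s \<le> N" using s(1) unfolding N_def by simp
    ultimately show "\<exists>y. aff v y z \<and> length z \<le> length y + N" using s(2) by force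
  qed
  then show ?thesis unfolding good_def using bij bij_is_inj by blast
qed

lemma BU_aux:
  assumes "\<And>u. F u = \<omega> (F (u @ [False]), F (u @ [True]))"
      and "\<And>u. G u = \<omega> (G (u @ [False]), G (u @ [True]))"
      and "\<And>r. N \<le> length r \<Longrightarrow> F r = G r"
  shows "N \<le> length u + k \<Longrightarrow> F u = G u"
proof (induction k arbitrary: u)
  case 0 then show ?case using assms(3) by simp
next
  case (Suc k)
  have "F (u @ [False]) = G (u @ [False])" "F (u @ [True]) = G (u @ [True])"
    using Suc by auto
  have "F u = \<omega> (F (u @ [False]), F (u @ [True]))" by (rule assms(1))
  also have "\<dots> = \<omega> (G (u @ [False]), G (u @ [True]))" using \<open>F (u @ [False]) = G (u @ [False])\<close> \<open>F (u @ [True]) = G (u @ [True])\<close> by simp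
  also have "\<dots> = G u" by (rule assms(2)[symmetric])
  finally show ?case .
qed

lemma BU:
  assumes "\<And>u. F u = \<omega> (F (u @ [False]), F (u @ [True]))"
      and "\<And>u. G u = \<omega> (G (u @ [False]), G (u @ [True]))"
      and "\<And>r. N \<le> length r \<Longrightarrow> F r = G r"
  shows "F u = G u"
  using BU_aux[OF assms, where u=u and k="N"] by simp

lemma U:
  assumes "b \<in> K_set \<Gamma> \<omega>" "b' \<in> K_set \<Gamma> \<omega>" "\<And>y. N \<le> length y \<Longrightarrow> b y = b' y"
  shows "b = b'"
proof
  fix u show "b u = b' u"
    by (rule BU[where \<omega>=\<omega> and N=N]) (use assms in \<open>(unfold K_set_def, blast)+\<close>)
qed

fun fillk :: "('g \<times> 'g \<Rightarrow> 'g) \<Rightarrow> (bool list \<Rightarrow> 'g) \<Rightarrow> nat \<Rightarrow> bool list \<Rightarrow> 'g" where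
  "fillk \<omega> f 0 u = f u"
| "fillk \<omega> f (Suc k) u = \<omega> (fillk \<omega> f k (u @ [False]), fillk \<omega> f k (u @ [True]))"

definition fill where "fill \<omega> N f u = fillk \<omega> f (N - length u) u"


lemma fillk_carrier:
  assumes "\<forall>p q. p \<in> carrier \<Gamma> \<longrightarrow> q \<in> carrier \<Gamma> \<longrightarrow> \<omega> (p, q) \<in> carrier \<Gamma>"
    "\<And>u. N \<le> length u \<Longrightarrow> f u \<in> carrier \<Gamma>"
  shows "N \<le> length u + k \<Longrightarrow> fillk \<omega> f k u \<in> carrier \<Gamma>"
  by (induction k arbitrary: u) (use assms in auto)

lemma fill_K:
  assumes clo: "\<forall>p q. p \<in> carrier \<Gamma> \<longrightarrow> q \<in> carrier \<Gamma> \<longrightarrow> \<omega> (p, q) \<in> carrier \<Gamma>"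
    and fc: "\<And>u. N \<le> length u \<Longrightarrow> f u \<in> carrier \<Gamma>"
    and fr: "\<And>u. N \<le> length u \<Longrightarrow> f u = \<omega> (f (u @ [False]), f (u @ [True]))"
  shows "fill \<omega> N f \<in> K_set \<Gamma> \<omega>" and "\<And>u. N \<le> length u \<Longrightarrow> fill \<omega> N f u = f u"
proof -
  show e: "\<And>u. N \<le> length u \<Longrightarrow> fill \<omega> N f u = f u" by (simp add: fill_def)
  have "\<forall>u. fill \<omega> N f u \<in> carrier \<Gamma>"
    unfolding fill_def using fillk_carrier[OF clo fc] by simp
  moreover have "fill \<omega> N f u = \<omega> (fill \<omega> N f (u @ [False]), fill \<omega> N f (u @ [True]))" for u
  proof (cases "N \<le> length u")
    case True
    have "fill \<omega> N f u = f u" using e True by blast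
    also have "\<dots> = \<omega> (f (u @ [False]), f (u @ [True]))" using fr True by blast
    also have "\<dots> = \<omega> (fill \<omega> N f (u @ [False]), fill \<omega> N f (u @ [True]))"
      using e True by simp
    finally show ?thesis .
  next
    case False
    then have "N - length u = Suc (N - length (u @ [False]))" "N - length (u @ [True]) = N - length (u @ [False])"
      by auto
    then show ?thesis unfolding fill_def by simp
  qed
  ultimately show "fill \<omega> N f \<in> K_set \<Gamma> \<omega>" unfolding K_set_def by blast
qed


lemma EX:
  assumes clo: "\<forall>p q. p \<in> carrier \<Gamma> \<longrightarrow> q \<in> carrier \<Gamma> \<longrightarrow> \<omega> (p, q) \<in> carrier \<Gamma>"
    and gv: "good v"
    and gc: "\<And>x y. aff v x y \<Longrightarrow> g x y \<in> carrier \<Gamma>"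
    and gr: "\<And>x y. aff v x y \<Longrightarrow> g x y = \<omega> (g (x @ [False]) (y @ [False]), g (x @ [True]) (y @ [True]))"
  shows "\<exists>!b. b \<in> K_set \<Gamma> \<omega> \<and> (\<forall>x y. aff v x y \<longrightarrow> b y = g x y)"
proof -
  have inj: "inj v" using gv good_def by blast
  obtain N where N: "\<And>z. N \<le> length z \<Longrightarrow> \<exists>y. aff v y z \<and> length z \<le> length y + N"
    using gv good_def by blast
  define pre where "pre z = (SOME x. aff v x z)" for z
  have pre: "aff v (pre z) z" if "N \<le> length z" for z
    using N[OF that] unfolding pre_def by (metis someI_ex)
  have pre_eq: "pre z = x" if "aff v x z" for x z
    using that unfolding pre_def by (metis aff_uniq_pre inj someI_ex)
  define f where "f z = g (pre z) z" for z
  have fc: "f u \<in> carrier \<Gamma>" if "N \<le> length u" for u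
    unfolding f_def using gc[OF pre[OF that]] .
  have fr: "f u = \<omega> (f (u @ [False]), f (u @ [True]))" if "N \<le> length u" for u
  proof -
    have a: "aff v (pre u) u" using pre that by blast
    have p: "pre (u @ [b]) = pre u @ [b]" for b by (rule pre_eq[OF aff_app[OF a]])
    show ?thesis unfolding f_def p using gr[OF a] .
  qed
  define b where "b = fill \<omega> N f"
  have bK: "b \<in> K_set \<Gamma> \<omega>" unfolding b_def by (rule fill_K(1)[OF clo fc fr])
  have bd: "b u = f u" if "N \<le> length u" for u unfolding b_def by (rule fill_K(2)[OF clo fc fr that])
  have bg: "\<forall>x y. aff v x y \<longrightarrow> b y = g x y"
  proof (intro allI impI)
    fix x y assume xy: "aff v x y"
    have "(\<lambda>r. b (y @ r)) [] = (\<lambda>r. g (x @ r) (y @ r)) []"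
    proof (rule BU[where \<omega>=\<omega> and N=N and F="\<lambda>r. b (y @ r)" and G="\<lambda>r. g (x @ r) (y @ r)"])
      fix u show "b (y @ u) = \<omega> (b (y @ u @ [False]), b (y @ u @ [True]))"
      proof -
        have "b (y @ u) = \<omega> (b ((y @ u) @ [False]), b ((y @ u) @ [True]))"
          using bK unfolding K_set_def by blast
        then show ?thesis by (simp only: append_assoc)
      qed
      show "g (x @ u) (y @ u) = \<omega> (g (x @ u @ [False]) (y @ u @ [False]), g (x @ u @ [True]) (y @ u @ [True]))"
        using gr[OF aff_app[OF xy, of u]] by simp
    next
      fix r :: "bool list" assume "N \<le> length r"
      then have "N \<le> length (y @ r)" by simp
      then have "b (y @ r) = f (y @ r)" by (rule bd)
      also have "\<dots> = g (x @ r) (y @ r)" unfolding f_def pre_eq[OF aff_app[OF xy]] ..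
      finally show "b (y @ r) = g (x @ r) (y @ r)" .
    qed
    then show "b y = g x y" by simp
  qed
  show ?thesis
  proof (rule ex1I[of _ b])
    show "b \<in> K_set \<Gamma> \<omega> \<and> (\<forall>x y. aff v x y \<longrightarrow> b y = g x y)" using bK bg by blast
    fix b' assume b': "b' \<in> K_set \<Gamma> \<omega> \<and> (\<forall>x y. aff v x y \<longrightarrow> b' y = g x y)"
    show "b' = b"
    proof (rule U[where N=N])
      show "b' \<in> K_set \<Gamma> \<omega>" "b \<in> K_set \<Gamma> \<omega>" using b' bK by auto
      fix y :: "bool list" assume "N \<le> length y"
      then have "aff v (pre y) y" by (rule pre)
      then show "b' y = b y" using b' bg by simp
    qed
  qed
qed

definition Tw where
  "Tw \<Gamma> \<omega> v g = (THE b. b \<in> K_set \<Gamma> \<omega> \<and> (\<forall>x y. aff v x y \<longrightarrow> b y = g x y))"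

lemma Tw:
  assumes clo: "\<forall>p q. p \<in> carrier \<Gamma> \<longrightarrow> q \<in> carrier \<Gamma> \<longrightarrow> \<omega> (p, q) \<in> carrier \<Gamma>"
    and gv: "good v"
    and gc: "\<And>x y. aff v x y \<Longrightarrow> g x y \<in> carrier \<Gamma>"
    and gr: "\<And>x y. aff v x y \<Longrightarrow> g x y = \<omega> (g (x @ [False]) (y @ [False]), g (x @ [True]) (y @ [True]))"
  shows "Tw \<Gamma> \<omega> v g \<in> K_set \<Gamma> \<omega>" "\<And>x y. aff v x y \<Longrightarrow> Tw \<Gamma> \<omega> v g y = g x y"
    "\<And>b. b \<in> K_set \<Gamma> \<omega> \<Longrightarrow> (\<forall>x y. aff v x y \<longrightarrow> b y = g x y) \<Longrightarrow> Tw \<Gamma> \<omega> v g = b"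
proof -
  note E = EX[where \<Gamma>=\<Gamma> and \<omega>=\<omega> and v=v and g=g, OF clo gv gc gr]
  have "Tw \<Gamma> \<omega> v g \<in> K_set \<Gamma> \<omega> \<and> (\<forall>x y. aff v x y \<longrightarrow> Tw \<Gamma> \<omega> v g y = g x y)"
    unfolding Tw_def by (rule theI'[OF E])
  then show "Tw \<Gamma> \<omega> v g \<in> K_set \<Gamma> \<omega>" "\<And>x y. aff v x y \<Longrightarrow> Tw \<Gamma> \<omega> v g y = g x y" by auto
  show "\<And>b. b \<in> K_set \<Gamma> \<omega> \<Longrightarrow> (\<forall>x y. aff v x y \<longrightarrow> b y = g x y) \<Longrightarrow> Tw \<Gamma> \<omega> v g = b"
    unfolding Tw_def using E by (rule the1_equality) auto
qed

lemma grp_alg1: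
  fixes G (structure)
  assumes "group G" "P \<in> carrier G" "Q \<in> carrier G" "R \<in> carrier G" "h \<in> carrier G"
  shows "inv (h \<otimes> P) \<otimes> (h \<otimes> Q \<otimes> inv h) \<otimes> (h \<otimes> R)
     = inv P \<otimes> Q \<otimes> R"
proof -
  interpret group G by fact
  show ?thesis using assms(2-) by (simp add: m_assoc inv_mult_group flip: m_assoc[of "inv h" h] m_assoc[of "inv h"])
qed

lemma grp_alg2:
  fixes G (structure)
  assumes "group G" "P \<in> carrier G" "Q \<in> carrier G" "R \<in> carrier G" "h \<in> carrier G"
  shows "(h \<otimes> P) \<otimes> Q \<otimes> inv (h \<otimes> R)
     = h \<otimes> (P \<otimes> Q \<otimes> inv R) \<otimes> inv h"
proof -
  interpret group G by fact
  show ?thesis using assms(2-) by (simp add: m_assoc inv_mult_group)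
qed

lemma grp_alg3:
  fixes G (structure)
  assumes "group G" "z \<in> carrier G" "a \<in> carrier G" "b \<in> carrier G" "y \<in> carrier G" "x \<in> carrier G"
  shows "inv z \<otimes> (a \<otimes> b) \<otimes> x
     = (inv z \<otimes> a \<otimes> y) \<otimes> (inv y \<otimes> b \<otimes> x)"
proof -
  interpret group G by fact
  show ?thesis using assms(2-) by (simp add: m_assoc flip: m_assoc[of y "inv y"])
qed

lemma grp_alg4:
  fixes G (structure)
  assumes "group G" "c \<in> carrier G" "b \<in> carrier G" "x \<in> carrier G"
  shows "inv c \<otimes> (c \<otimes> b \<otimes> inv x) \<otimes> x = b"
proof -
  interpret group G by fact
  show ?thesis using assms(2-) by (simp add: m_assoc flip: m_assoc[of "inv c" c])
qed

lemma grp_alg5: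
  fixes G (structure)
  assumes "group G" "c \<in> carrier G" "a \<in> carrier G" "a' \<in> carrier G" "x \<in> carrier G"
   "inv c \<otimes> a \<otimes> x = inv c \<otimes> a' \<otimes> x"
  shows "a = a'"
proof -
  interpret group G by fact
  show ?thesis using assms(2-) by (simp add: m_assoc)
qed

lemma grp_alg6:
  fixes G (structure)
  assumes "group G" "h \<in> carrier G" "A \<in> carrier G" "B \<in> carrier G"
  shows "h \<otimes> (A \<otimes> B) \<otimes> inv h = (h \<otimes> A \<otimes> inv h) \<otimes> (h \<otimes> B \<otimes> inv h)"
proof -
  interpret group G by fact
  show ?thesis using assms(2-) by (simp add: m_assoc flip: m_assoc[of "inv h" h])
qed

lemma omega_props:
  assumes "group \<Gamma>" "\<omega> \<in> hom (\<Gamma> \<times>\<times> \<Gamma>) \<Gamma>"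
  shows "\<forall>p q. p \<in> carrier \<Gamma> \<longrightarrow> q \<in> carrier \<Gamma> \<longrightarrow> \<omega> (p, q) \<in> carrier \<Gamma>"
    and "\<And>p q p' q'. p \<in> carrier \<Gamma> \<Longrightarrow> q \<in> carrier \<Gamma> \<Longrightarrow> p' \<in> carrier \<Gamma> \<Longrightarrow> q' \<in> carrier \<Gamma> \<Longrightarrow>
          \<omega> (p \<otimes>\<^bsub>\<Gamma>\<^esub> p', q \<otimes>\<^bsub>\<Gamma>\<^esub> q') = \<omega> (p, q) \<otimes>\<^bsub>\<Gamma>\<^esub> \<omega> (p', q')"
    and "\<And>p q. p \<in> carrier \<Gamma> \<Longrightarrow> q \<in> carrier \<Gamma> \<Longrightarrow> \<omega> (inv\<^bsub>\<Gamma>\<^esub> p, inv\<^bsub>\<Gamma>\<^esub> q) = inv\<^bsub>\<Gamma>\<^esub> \<omega> (p, q)"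
proof -
  show "\<forall>p q. p \<in> carrier \<Gamma> \<longrightarrow> q \<in> carrier \<Gamma> \<longrightarrow> \<omega> (p, q) \<in> carrier \<Gamma>"
    using assms(2) unfolding hom_def by (auto simp: Pi_iff)
  show "\<And>p q p' q'. p \<in> carrier \<Gamma> \<Longrightarrow> q \<in> carrier \<Gamma> \<Longrightarrow> p' \<in> carrier \<Gamma> \<Longrightarrow> q' \<in> carrier \<Gamma> \<Longrightarrow>
          \<omega> (p \<otimes>\<^bsub>\<Gamma>\<^esub> p', q \<otimes>\<^bsub>\<Gamma>\<^esub> q') = \<omega> (p, q) \<otimes>\<^bsub>\<Gamma>\<^esub> \<omega> (p', q')"
  proof -
    fix p q p' q' assume "p \<in> carrier \<Gamma>" "q \<in> carrier \<Gamma>" "p' \<in> carrier \<Gamma>" "q' \<in> carrier \<Gamma>"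
    then have "\<omega> ((p, q) \<otimes>\<^bsub>\<Gamma> \<times>\<times> \<Gamma>\<^esub> (p', q')) = \<omega> (p, q) \<otimes>\<^bsub>\<Gamma>\<^esub> \<omega> (p', q')"
      using assms(2) unfolding hom_def by auto
    then show "\<omega> (p \<otimes>\<^bsub>\<Gamma>\<^esub> p', q \<otimes>\<^bsub>\<Gamma>\<^esub> q') = \<omega> (p, q) \<otimes>\<^bsub>\<Gamma>\<^esub> \<omega> (p', q')" by simp
  qed
  interpret gh: group_hom "\<Gamma> \<times>\<times> \<Gamma>" \<Gamma> \<omega>
    unfolding group_hom_def group_hom_axioms_def using assms DirProd_group by blast
  fix p q assume pq: "p \<in> carrier \<Gamma>" "q \<in> carrier \<Gamma>"
  have "\<omega> (inv\<^bsub>\<Gamma> \<times>\<times> \<Gamma>\<^esub> (p, q)) = inv\<^bsub>\<Gamma>\<^esub> \<omega> (p, q)" using pq by (intro gh.hom_inv) simp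
  then show "\<omega> (inv\<^bsub>\<Gamma>\<^esub> p, inv\<^bsub>\<Gamma>\<^esub> q) = inv\<^bsub>\<Gamma>\<^esub> \<omega> (p, q)"
    using inv_DirProd[OF assms(1) assms(1) pq] by simp
qed

lemma K_mult:
  fixes \<Gamma> (structure)
  assumes "group \<Gamma>"
    and mul: "\<And>p q p' q'. p \<in> carrier \<Gamma> \<Longrightarrow> q \<in> carrier \<Gamma> \<Longrightarrow> p' \<in> carrier \<Gamma> \<Longrightarrow> q' \<in> carrier \<Gamma> \<Longrightarrow>
          \<omega> (p \<otimes>\<^bsub>\<Gamma>\<^esub> p', q \<otimes>\<^bsub>\<Gamma>\<^esub> q') = \<omega> (p, q) \<otimes>\<^bsub>\<Gamma>\<^esub> \<omega> (p', q')"
    and "a \<in> K_set \<Gamma> \<omega>" "b \<in> K_set \<Gamma> \<omega>"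
  shows "(\<lambda>u. a u \<otimes>\<^bsub>\<Gamma>\<^esub> b u) \<in> K_set \<Gamma> \<omega>"
proof -
  interpret group \<Gamma> by fact
  have ac: "a u \<in> carrier \<Gamma>" "b u \<in> carrier \<Gamma>" for u using assms(3,4) unfolding K_set_def by blast+
  have ar: "a u = \<omega> (a (u @ [False]), a (u @ [True]))" "b u = \<omega> (b (u @ [False]), b (u @ [True]))" for u
    using assms(3,4) unfolding K_set_def by blast+
  have "a u \<otimes> b u = \<omega> (a (u @ [False]) \<otimes> b (u @ [False]), a (u @ [True]) \<otimes> b (u @ [True]))" for u
    using mul[OF ac(1)[of "u @ [False]"] ac(1)[of "u @ [True]"] ac(2)[of "u @ [False]"] ac(2)[of "u @ [True]"]]
      ar(1)[of u] ar(2)[of u] by simp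
  moreover have "a u \<otimes> b u \<in> carrier \<Gamma>" for u using ac by simp
  ultimately show ?thesis unfolding K_set_def by blast
qed

lemma descr_cover:
  assumes D: "V_descr v ts ss \<sigma>"
  shows "\<exists>N. \<forall>z. N \<le> length z \<longrightarrow> (\<exists>i<length ts. \<exists>r. z = ss ! \<sigma> i @ r)"
proof -
  define N where "N = Max (length ` set ss)"
  have "\<forall>z. N \<le> length z \<longrightarrow> (\<exists>i<length ts. \<exists>r. z = ss ! \<sigma> i @ r)"
  proof (intro allI impI)
    fix z :: "bool list" assume z: "N \<le> length z"
    have "\<forall>t\<in>set ss. length t \<le> length z"
      using z unfolding N_def by (meson Max_ge List.finite_set finite_imageI image_eqI le_trans)
    then obtain s r where s: "s \<in> set ss" "z = s @ r"
      using code_prefix D unfolding V_descr_def by blast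
    obtain j where j: "j < length ss" "ss ! j = s" using s(1) by (meson in_set_conv_nth)
    have "j \<in> \<sigma> ` {..<length ts}" using D j unfolding V_descr_def bij_betw_def by auto
    then obtain i where i: "i < length ts" "\<sigma> i = j" by auto
    then have "z = ss ! \<sigma> i @ r" using s j by simp
    then show "\<exists>i<length ts. \<exists>r. z = ss ! \<sigma> i @ r" using i by blast
  qed
  then show ?thesis by blast
qed

lemma V_act_char:
  assumes clo: "\<forall>p q. p \<in> carrier \<Gamma> \<longrightarrow> q \<in> carrier \<Gamma> \<longrightarrow> \<omega> (p, q) \<in> carrier \<Gamma>"
    and vV: "v \<in> thompsonV_set" and aK: "a \<in> K_set \<Gamma> \<omega>"
  shows "V_act \<Gamma> \<omega> v a = Tw \<Gamma> \<omega> v (\<lambda>x y. a x)"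
proof -
  have gv: "good v" by (rule V_good[OF vV])
  have gc: "a x \<in> carrier \<Gamma>" for x using aK unfolding K_set_def by blast
  have gr: "a x = \<omega> (a (x @ [False]), a (x @ [True]))" for x using aK unfolding K_set_def by blast
  note T = Tw[where \<Gamma>=\<Gamma> and \<omega>=\<omega> and v=v and g="\<lambda>x y. a x", OF clo gv gc gr]
  define Tv where "Tv = Tw \<Gamma> \<omega> v (\<lambda>x y. a x)"
  have TK: "Tv \<in> K_set \<Gamma> \<omega>" and Ta: "\<And>x y. aff v x y \<Longrightarrow> Tv y = a x" using T(1,2) unfolding Tv_def by auto
  show ?thesis unfolding V_act_def Tv_def[symmetric]
  proof (rule the_equality)
    show "Tv \<in> K_set \<Gamma> \<omega> \<and> (\<forall>ts ss \<sigma>. V_descr v ts ss \<sigma> \<longrightarrow>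
         (\<forall>i<length ts. \<forall>u. Tv (ss ! \<sigma> i @ u) = a (ts ! i @ u)))"
    proof (intro conjI allI impI TK)
      fix ts ss \<sigma> i u assume D: "V_descr v ts ss \<sigma>" and i: "i < length ts"
      have "aff v (ts ! i) (ss ! \<sigma> i)" using D i unfolding V_descr_def aff_def by auto
      then show "Tv (ss ! \<sigma> i @ u) = a (ts ! i @ u)" using Ta aff_app by blast
    qed
    fix b assume b: "b \<in> K_set \<Gamma> \<omega> \<and> (\<forall>ts ss \<sigma>. V_descr v ts ss \<sigma> \<longrightarrow>
         (\<forall>i<length ts. \<forall>u. b (ss ! \<sigma> i @ u) = a (ts ! i @ u)))"
    obtain ts ss \<sigma> where D: "V_descr v ts ss \<sigma>" using vV unfolding thompsonV_set_def by blast
    obtain N where N: "\<forall>z. N \<le> length z \<longrightarrow> (\<exists>i<length ts. \<exists>r. z = ss ! \<sigma> i @ r)"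
      using descr_cover[OF D] by blast
    show "b = Tv"
    proof (rule U[where N=N])
      show "b \<in> K_set \<Gamma> \<omega>" "Tv \<in> K_set \<Gamma> \<omega>" using b TK by auto
      fix y :: "bool list" assume "N \<le> length y"
      then obtain i r where ir: "i < length ts" "y = ss ! \<sigma> i @ r" using N by blast
      have "aff v (ts ! i) (ss ! \<sigma> i)" using D ir unfolding V_descr_def aff_def by auto
      then have "Tv y = a (ts ! i @ r)" using Ta aff_app ir by blast
      moreover have "b y = a (ts ! i @ r)" using b D ir by blast
      ultimately show "b y = Tv y" by simp
    qed
  qed
qed

primrec cr :: "('g \<Rightarrow> 'g \<times> 'g) \<Rightarrow> 'g \<Rightarrow> bool list \<Rightarrow> 'g" where
  "cr F e [] = e"
| "cr F e (b # u) = (if b then snd else fst) (F (cr F e u))"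

lemma c_exists:
  fixes \<Gamma> (structure)
  assumes "group \<Gamma>" "\<omega> ` (carrier \<Gamma> \<times> carrier \<Gamma>) = carrier \<Gamma>" "h \<in> carrier \<Gamma>"
  shows "\<exists>c. \<forall>u. c u \<in> carrier \<Gamma> \<and> c u = h \<otimes>\<^bsub>\<Gamma>\<^esub> \<omega> (c (u @ [False]), c (u @ [True]))"
proof -
  interpret group \<Gamma> by fact
  define sel where "sel g = (SOME pq. pq \<in> carrier \<Gamma> \<times> carrier \<Gamma> \<and> \<omega> pq = g)" for g
  have sel: "sel g \<in> carrier \<Gamma> \<times> carrier \<Gamma> \<and> \<omega> (sel g) = g" if "g \<in> carrier \<Gamma>" for g
  proof -
    have "\<exists>pq. pq \<in> carrier \<Gamma> \<times> carrier \<Gamma> \<and> \<omega> pq = g" using assms(2) that by force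
    then show ?thesis unfolding sel_def by (rule someI_ex)
  qed
  define F where "F g = sel (inv h \<otimes> g)" for g
  define c where "c u = cr F \<one> (rev u)" for u
  have Fc: "F g \<in> carrier \<Gamma> \<times> carrier \<Gamma>" if "g \<in> carrier \<Gamma>" for g
    unfolding F_def using sel[of "inv h \<otimes> g"] that assms(3) by simp
  have cc: "cr F \<one> u \<in> carrier \<Gamma>" for u
  proof (induction u)
    case Nil then show ?case by simp
  next
    case (Cons b u)
    have "F (cr F \<one> u) \<in> carrier \<Gamma> \<times> carrier \<Gamma>" using Fc Cons by blast
    then show ?case by (cases b) auto
  qed
  have "c u = h \<otimes> \<omega> (c (u @ [False]), c (u @ [True]))" for u
  proof -
    have e: "(c (u @ [False]), c (u @ [True])) = F (c u)" unfolding c_def by simp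
    have cu: "c u \<in> carrier \<Gamma>" unfolding c_def by (rule cc)
    have i: "inv h \<otimes> c u \<in> carrier \<Gamma>" using cu assms(3) by simp
    have "\<omega> (F (c u)) = inv h \<otimes> c u" unfolding F_def using sel[OF i] by blast
    then have "\<omega> (c (u @ [False]), c (u @ [True])) = inv h \<otimes> c u" unfolding e .
    then have "h \<otimes> \<omega> (c (u @ [False]), c (u @ [True])) = h \<otimes> (inv h \<otimes> c u)" by simp
    also have "\<dots> = c u" using cu assms(3) by (simp add: m_assoc[symmetric])
    finally show ?thesis by simp
  qed
  moreover have "c u \<in> carrier \<Gamma>" for u unfolding c_def by (rule cc)
  ultimately show ?thesis by blast
qed

theorem mainTheorem15:
  fixes \<Gamma> :: "('g, 'm) monoid_scheme" and \<omega> :: "'g \<times> 'g \<Rightarrow> 'g" and h :: 'g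
  assumes "group \<Gamma>"
    and "\<omega> \<in> hom (\<Gamma> \<times>\<times> \<Gamma>) \<Gamma>"
    and "\<omega> ` carrier (\<Gamma> \<times>\<times> \<Gamma>) = carrier \<Gamma>"
    and "h \<in> carrier \<Gamma>"
  shows "G_grp \<Gamma> (ad \<Gamma> h \<circ> \<omega>) \<cong> G_grp \<Gamma> \<omega>"
proof -
  interpret G: group \<Gamma> by fact
  note op = omega_props[OF assms(1,2)]
  note clo = op(1)
  have oc: "\<omega> (p, q) \<in> carrier \<Gamma>" if "p \<in> carrier \<Gamma>" "q \<in> carrier \<Gamma>" for p q using clo that by blast
  note mul = op(2)
  note oinv = op(3)
  define w' where "w' = ad \<Gamma> h \<circ> \<omega>"
  have w'eq: "w' (p, q) = h \<otimes>\<^bsub>\<Gamma>\<^esub> \<omega> (p, q) \<otimes>\<^bsub>\<Gamma>\<^esub> inv\<^bsub>\<Gamma>\<^esub> h" for p q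
    by (simp add: w'_def ad_def)
  have clo': "\<forall>p q. p \<in> carrier \<Gamma> \<longrightarrow> q \<in> carrier \<Gamma> \<longrightarrow> w' (p, q) \<in> carrier \<Gamma>"
    using oc assms(4) w'eq by simp
  have mul': "w' (p \<otimes>\<^bsub>\<Gamma>\<^esub> p', q \<otimes>\<^bsub>\<Gamma>\<^esub> q') = w' (p, q) \<otimes>\<^bsub>\<Gamma>\<^esub> w' (p', q')"
    if "p \<in> carrier \<Gamma>" "q \<in> carrier \<Gamma>" "p' \<in> carrier \<Gamma>" "q' \<in> carrier \<Gamma>" for p q p' q'
    unfolding w'eq mul[OF that] using grp_alg6[OF assms(1) assms(4) oc[OF that(1,2)] oc[OF that(3,4)]] .
  have surj: "\<omega> ` (carrier \<Gamma> \<times> carrier \<Gamma>) = carrier \<Gamma>" using assms(3) by simp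
  obtain c where c: "\<forall>u. c u \<in> carrier \<Gamma> \<and> c u = h \<otimes>\<^bsub>\<Gamma>\<^esub> \<omega> (c (u @ [False]), c (u @ [True]))"
    using c_exists[OF assms(1) surj assms(4)] by blast
  have cc: "c u \<in> carrier \<Gamma>" for u using c by blast
  have crec: "c u = h \<otimes>\<^bsub>\<Gamma>\<^esub> \<omega> (c (u @ [False]), c (u @ [True]))" for u using c by blast
  define tw where "tw a x y = inv\<^bsub>\<Gamma>\<^esub> c y \<otimes>\<^bsub>\<Gamma>\<^esub> a y \<otimes>\<^bsub>\<Gamma>\<^esub> c x" for a :: "bool list \<Rightarrow> 'g" and x y
  define tu where "tu b x y = c y \<otimes>\<^bsub>\<Gamma>\<^esub> b y \<otimes>\<^bsub>\<Gamma>\<^esub> inv\<^bsub>\<Gamma>\<^esub> c x" for b :: "bool list \<Rightarrow> 'g" and x y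
  have Kc: "a u \<in> carrier \<Gamma>" if "a \<in> K_set \<Gamma> f" for a f u using that unfolding K_set_def by blast
  have Kr: "a u = f (a (u @ [False]), a (u @ [True]))" if "a \<in> K_set \<Gamma> f" for a f u
    using that unfolding K_set_def by blast
  have twc: "tw a x y \<in> carrier \<Gamma>" if "a \<in> K_set \<Gamma> w'" for a x y
    unfolding tw_def using Kc[OF that] cc by simp
  have tuc: "tu b x y \<in> carrier \<Gamma>" if "b \<in> K_set \<Gamma> \<omega>" for b x y
    unfolding tu_def using Kc[OF that] cc by simp
  have twr: "tw a x y = \<omega> (tw a (x @ [False]) (y @ [False]), tw a (x @ [True]) (y @ [True]))"
    if aK: "a \<in> K_set \<Gamma> w'" for a x y
  proof -
    define P where "P = \<omega> (c (y @ [False]), c (y @ [True]))"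
    define Q where "Q = \<omega> (a (y @ [False]), a (y @ [True]))"
    define R where "R = \<omega> (c (x @ [False]), c (x @ [True]))"
    have PQR: "P \<in> carrier \<Gamma>" "Q \<in> carrier \<Gamma>" "R \<in> carrier \<Gamma>"
      unfolding P_def Q_def R_def using oc cc Kc[OF aK] by auto
    have e1: "c y = h \<otimes>\<^bsub>\<Gamma>\<^esub> P" unfolding P_def by (rule crec)
    have e2: "a y = h \<otimes>\<^bsub>\<Gamma>\<^esub> Q \<otimes>\<^bsub>\<Gamma>\<^esub> inv\<^bsub>\<Gamma>\<^esub> h" unfolding Q_def w'eq[symmetric] by (rule Kr[OF aK])
    have e3: "c x = h \<otimes>\<^bsub>\<Gamma>\<^esub> R" unfolding R_def by (rule crec)
    have "tw a x y = inv\<^bsub>\<Gamma>\<^esub> (h \<otimes>\<^bsub>\<Gamma>\<^esub> P) \<otimes>\<^bsub>\<Gamma>\<^esub> (h \<otimes>\<^bsub>\<Gamma>\<^esub> Q \<otimes>\<^bsub>\<Gamma>\<^esub> inv\<^bsub>\<Gamma>\<^esub> h) \<otimes>\<^bsub>\<Gamma>\<^esub> (h \<otimes>\<^bsub>\<Gamma>\<^esub> R)"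
      unfolding tw_def e1[symmetric] e2[symmetric] e3[symmetric] ..
    also have "\<dots> = inv\<^bsub>\<Gamma>\<^esub> P \<otimes>\<^bsub>\<Gamma>\<^esub> Q \<otimes>\<^bsub>\<Gamma>\<^esub> R"
      by (rule grp_alg1[OF assms(1) PQR assms(4)])
    also have "inv\<^bsub>\<Gamma>\<^esub> P = \<omega> (inv\<^bsub>\<Gamma>\<^esub> c (y @ [False]), inv\<^bsub>\<Gamma>\<^esub> c (y @ [True]))"
      unfolding P_def using oinv cc by simp
    also have "\<omega> (inv\<^bsub>\<Gamma>\<^esub> c (y @ [False]), inv\<^bsub>\<Gamma>\<^esub> c (y @ [True])) \<otimes>\<^bsub>\<Gamma>\<^esub> Q
       = \<omega> (inv\<^bsub>\<Gamma>\<^esub> c (y @ [False]) \<otimes>\<^bsub>\<Gamma>\<^esub> a (y @ [False]), inv\<^bsub>\<Gamma>\<^esub> c (y @ [True]) \<otimes>\<^bsub>\<Gamma>\<^esub> a (y @ [True]))"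
      unfolding Q_def using mul cc Kc[OF aK] by simp
    also have "\<omega> (inv\<^bsub>\<Gamma>\<^esub> c (y @ [False]) \<otimes>\<^bsub>\<Gamma>\<^esub> a (y @ [False]), inv\<^bsub>\<Gamma>\<^esub> c (y @ [True]) \<otimes>\<^bsub>\<Gamma>\<^esub> a (y @ [True])) \<otimes>\<^bsub>\<Gamma>\<^esub> R
       = \<omega> (tw a (x @ [False]) (y @ [False]), tw a (x @ [True]) (y @ [True]))"
      unfolding R_def tw_def using mul cc Kc[OF aK] by simp
    finally show ?thesis .
  qed
  have tur: "tu b x y = w' (tu b (x @ [False]) (y @ [False]), tu b (x @ [True]) (y @ [True]))"
    if bK: "b \<in> K_set \<Gamma> \<omega>" for b x y
  proof -
    define P where "P = \<omega> (c (y @ [False]), c (y @ [True]))"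
    define Q where "Q = \<omega> (b (y @ [False]), b (y @ [True]))"
    define R where "R = \<omega> (c (x @ [False]), c (x @ [True]))"
    have PQR: "P \<in> carrier \<Gamma>" "Q \<in> carrier \<Gamma>" "R \<in> carrier \<Gamma>"
      unfolding P_def Q_def R_def using oc cc Kc[OF bK] by auto
    have e1: "c y = h \<otimes>\<^bsub>\<Gamma>\<^esub> P" unfolding P_def by (rule crec)
    have e2: "b y = Q" unfolding Q_def by (rule Kr[OF bK])
    have e3: "c x = h \<otimes>\<^bsub>\<Gamma>\<^esub> R" unfolding R_def by (rule crec)
    have "tu b x y = (h \<otimes>\<^bsub>\<Gamma>\<^esub> P) \<otimes>\<^bsub>\<Gamma>\<^esub> Q \<otimes>\<^bsub>\<Gamma>\<^esub> inv\<^bsub>\<Gamma>\<^esub> (h \<otimes>\<^bsub>\<Gamma>\<^esub> R)"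
      unfolding tu_def e1[symmetric] e2[symmetric] e3[symmetric] ..
    also have "\<dots> = h \<otimes>\<^bsub>\<Gamma>\<^esub> (P \<otimes>\<^bsub>\<Gamma>\<^esub> Q \<otimes>\<^bsub>\<Gamma>\<^esub> inv\<^bsub>\<Gamma>\<^esub> R) \<otimes>\<^bsub>\<Gamma>\<^esub> inv\<^bsub>\<Gamma>\<^esub> h"
      by (rule grp_alg2[OF assms(1) PQR assms(4)])
    also have "inv\<^bsub>\<Gamma>\<^esub> R = \<omega> (inv\<^bsub>\<Gamma>\<^esub> c (x @ [False]), inv\<^bsub>\<Gamma>\<^esub> c (x @ [True]))"
      unfolding R_def using oinv cc by simp
    also have "P \<otimes>\<^bsub>\<Gamma>\<^esub> Q = \<omega> (c (y @ [False]) \<otimes>\<^bsub>\<Gamma>\<^esub> b (y @ [False]), c (y @ [True]) \<otimes>\<^bsub>\<Gamma>\<^esub> b (y @ [True]))"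
      unfolding P_def Q_def using mul cc Kc[OF bK] by simp
    also have "\<omega> (c (y @ [False]) \<otimes>\<^bsub>\<Gamma>\<^esub> b (y @ [False]), c (y @ [True]) \<otimes>\<^bsub>\<Gamma>\<^esub> b (y @ [True]))
       \<otimes>\<^bsub>\<Gamma>\<^esub> \<omega> (inv\<^bsub>\<Gamma>\<^esub> c (x @ [False]), inv\<^bsub>\<Gamma>\<^esub> c (x @ [True]))
       = \<omega> (tu b (x @ [False]) (y @ [False]), tu b (x @ [True]) (y @ [True]))"
      unfolding tu_def using mul cc Kc[OF bK] by simp
    also have "h \<otimes>\<^bsub>\<Gamma>\<^esub> \<dots> \<otimes>\<^bsub>\<Gamma>\<^esub> inv\<^bsub>\<Gamma>\<^esub> h = w' (tu b (x @ [False]) (y @ [False]), tu b (x @ [True]) (y @ [True]))"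
      unfolding w'eq ..
    finally show ?thesis .
  qed
  have TwP: "Tw \<Gamma> \<omega> v (tw a) \<in> K_set \<Gamma> \<omega> \<and> (\<forall>x y. aff v x y \<longrightarrow> Tw \<Gamma> \<omega> v (tw a) y = tw a x y)"
    if aK: "a \<in> K_set \<Gamma> w'" and gv: "good v" for a v
  proof -
    have 1: "\<And>x y. aff v x y \<Longrightarrow> tw a x y \<in> carrier \<Gamma>" using twc[OF aK] by blast
    have 2: "\<And>x y. aff v x y \<Longrightarrow> tw a x y = \<omega> (tw a (x @ [False]) (y @ [False]), tw a (x @ [True]) (y @ [True]))"
      using twr[OF aK] by blast
    show ?thesis using Tw[where \<Gamma>=\<Gamma> and \<omega>=\<omega> and v=v and g="tw a", OF clo gv 1 2] by blast
  qed
  have TuP: "Tw \<Gamma> w' v (tu b) \<in> K_set \<Gamma> w' \<and> (\<forall>x y. aff v x y \<longrightarrow> Tw \<Gamma> w' v (tu b) y = tu b x y)"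
    if bK: "b \<in> K_set \<Gamma> \<omega>" and gv: "good v" for b v
  proof -
    have 1: "\<And>x y. aff v x y \<Longrightarrow> tu b x y \<in> carrier \<Gamma>" using tuc[OF bK] by blast
    have 2: "\<And>x y. aff v x y \<Longrightarrow> tu b x y = w' (tu b (x @ [False]) (y @ [False]), tu b (x @ [True]) (y @ [True]))"
      using tur[OF bK] by blast
    show ?thesis using Tw[where \<Gamma>=\<Gamma> and \<omega>=w' and v=v and g="tu b", OF clo' gv 1 2] by blast
  qed
  have TwU: "Tw \<Gamma> \<omega> v (tw a) = b"
    if aK: "a \<in> K_set \<Gamma> w'" and gv: "good v" and bK: "b \<in> K_set \<Gamma> \<omega>"
      and bP: "\<forall>x y. aff v x y \<longrightarrow> b y = tw a x y" for a v b
  proof -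
    have 1: "\<And>x y. aff v x y \<Longrightarrow> tw a x y \<in> carrier \<Gamma>" using twc[OF aK] by blast
    have 2: "\<And>x y. aff v x y \<Longrightarrow> tw a x y = \<omega> (tw a (x @ [False]) (y @ [False]), tw a (x @ [True]) (y @ [True]))"
      using twr[OF aK] by blast
    show ?thesis by (rule Tw(3)[where \<Gamma>=\<Gamma> and \<omega>=\<omega> and v=v and g="tw a", OF clo gv 1 2 bK bP])
  qed
  have Gc: "carrier (G_grp \<Gamma> f) = K_set \<Gamma> f \<times> thompsonV_set" for f by (simp add: G_grp_def)
  define \<Phi> where "\<Phi> = (\<lambda>(a, v). (Tw \<Gamma> \<omega> v (tw a), v))"
  have \<Phi>c: "\<Phi> p \<in> carrier (G_grp \<Gamma> \<omega>)" if pc: "p \<in> carrier (G_grp \<Gamma> w')" for p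
  proof -
    obtain a v where p: "p = (a, v)" "a \<in> K_set \<Gamma> w'" "v \<in> thompsonV_set"
      using pc unfolding Gc by blast
    show ?thesis using TwP[OF p(2) V_good[OF p(3)]] p by (simp add: G_grp_def \<Phi>_def)
  qed
  have \<Phi>m: "\<Phi> (p \<otimes>\<^bsub>G_grp \<Gamma> w'\<^esub> q) = \<Phi> p \<otimes>\<^bsub>G_grp \<Gamma> \<omega>\<^esub> \<Phi> q"
    if pc: "p \<in> carrier (G_grp \<Gamma> w')" and qc: "q \<in> carrier (G_grp \<Gamma> w')" for p q
  proof -
    obtain a v where p: "p = (a, v)" "a \<in> K_set \<Gamma> w'" "v \<in> thompsonV_set"
      using pc unfolding Gc by blast
    obtain a' w where q: "q = (a', w)" "a' \<in> K_set \<Gamma> w'" "w \<in> thompsonV_set"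
      using qc unfolding Gc by blast
    have gv: "good v" by (rule V_good[OF p(3)])
    have gw: "good w" by (rule V_good[OF q(3)])
    have gvw: "good (v \<circ> w)" by (rule good_comp[OF gv gw])
    define S where "S = Tw \<Gamma> w' v (\<lambda>x y. a' x)"
    have S1: "V_act \<Gamma> w' v a' = S" unfolding S_def by (rule V_act_char[OF clo' p(3) q(2)])
    have Sp: "S \<in> K_set \<Gamma> w'" "\<And>x y. aff v x y \<Longrightarrow> S y = a' x"
    proof -
      have 1: "\<And>x y. aff v x y \<Longrightarrow> a' x \<in> carrier \<Gamma>" using Kc[OF q(2)] by blast
      have 2: "\<And>x y. aff v x y \<Longrightarrow> a' x = w' (a' (x @ [False]), a' (x @ [True]))" using Kr[OF q(2)] by blast
      note T = Tw[where \<Gamma>=\<Gamma> and \<omega>=w' and v=v and g="\<lambda>x y. a' x", OF clo' gv 1 2]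
      show "S \<in> K_set \<Gamma> w'" "\<And>x y. aff v x y \<Longrightarrow> S y = a' x" unfolding S_def using T(1,2) by auto
    qed
    define T1 where "T1 = Tw \<Gamma> \<omega> v (tw a)"
    define T2 where "T2 = Tw \<Gamma> \<omega> w (tw a')"
    have T1p: "T1 \<in> K_set \<Gamma> \<omega>" "\<And>x y. aff v x y \<Longrightarrow> T1 y = tw a x y" using TwP[OF p(2) gv] unfolding T1_def by auto
    have T2p: "T2 \<in> K_set \<Gamma> \<omega>" "\<And>x y. aff w x y \<Longrightarrow> T2 y = tw a' x y" using TwP[OF q(2) gw] unfolding T2_def by auto
    define S2 where "S2 = Tw \<Gamma> \<omega> v (\<lambda>x y. T2 x)"
    have S21: "V_act \<Gamma> \<omega> v T2 = S2" unfolding S2_def by (rule V_act_char[OF clo p(3) T2p(1)])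
    have S2p: "S2 \<in> K_set \<Gamma> \<omega>" "\<And>x y. aff v x y \<Longrightarrow> S2 y = T2 x"
    proof -
      have 1: "\<And>x y. aff v x y \<Longrightarrow> T2 x \<in> carrier \<Gamma>" using Kc[OF T2p(1)] by blast
      have 2: "\<And>x y. aff v x y \<Longrightarrow> T2 x = \<omega> (T2 (x @ [False]), T2 (x @ [True]))" using Kr[OF T2p(1)] by blast
      note T = Tw[where \<Gamma>=\<Gamma> and \<omega>=\<omega> and v=v and g="\<lambda>x y. T2 x", OF clo gv 1 2]
      show "S2 \<in> K_set \<Gamma> \<omega>" "\<And>x y. aff v x y \<Longrightarrow> S2 y = T2 x" unfolding S2_def using T(1,2) by auto
    qed
    define A where "A = (\<lambda>u. a u \<otimes>\<^bsub>\<Gamma>\<^esub> S u)"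
    have AK: "A \<in> K_set \<Gamma> w'" unfolding A_def by (rule K_mult[OF assms(1) mul' p(2) Sp(1)])
    define B where "B = (\<lambda>u. T1 u \<otimes>\<^bsub>\<Gamma>\<^esub> S2 u)"
    have BK: "B \<in> K_set \<Gamma> \<omega>" unfolding B_def by (rule K_mult[OF assms(1) mul T1p(1) S2p(1)])
    have LP: "Tw \<Gamma> \<omega> (v \<circ> w) (tw A) \<in> K_set \<Gamma> \<omega>" "\<And>x y. aff (v \<circ> w) x y \<Longrightarrow> Tw \<Gamma> \<omega> (v \<circ> w) (tw A) y = tw A x y"
      using TwP[OF AK gvw] by auto
    obtain Nv where Nv: "\<forall>z. Nv \<le> length z \<longrightarrow> (\<exists>y. aff v y z \<and> length z \<le> length y + Nv)"
      using gv good_def by blast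
    obtain Nw where Nw: "\<forall>z. Nw \<le> length z \<longrightarrow> (\<exists>y. aff w y z \<and> length z \<le> length y + Nw)"
      using gw good_def by blast
    have key: "Tw \<Gamma> \<omega> (v \<circ> w) (tw A) = B"
    proof (rule U[where N="Nv + Nw"])
      show "Tw \<Gamma> \<omega> (v \<circ> w) (tw A) \<in> K_set \<Gamma> \<omega>" "B \<in> K_set \<Gamma> \<omega>" using LP(1) BK by auto
      fix z :: "bool list" assume z: "Nv + Nw \<le> length z"
      then obtain y where y: "aff v y z" "length z \<le> length y + Nv" using Nv by force
      then have "Nw \<le> length y" using z by simp
      then obtain x where x: "aff w x y" using Nw by blast
      have xz: "aff (v \<circ> w) x z" by (rule aff_comp[OF x y(1)])
      have "Tw \<Gamma> \<omega> (v \<circ> w) (tw A) z = tw A x z" by (rule LP(2)[OF xz])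
      also have "\<dots> = inv\<^bsub>\<Gamma>\<^esub> c z \<otimes>\<^bsub>\<Gamma>\<^esub> (a z \<otimes>\<^bsub>\<Gamma>\<^esub> a' y) \<otimes>\<^bsub>\<Gamma>\<^esub> c x"
        unfolding tw_def A_def Sp(2)[OF y(1)] ..
      also have "\<dots> = (inv\<^bsub>\<Gamma>\<^esub> c z \<otimes>\<^bsub>\<Gamma>\<^esub> a z \<otimes>\<^bsub>\<Gamma>\<^esub> c y) \<otimes>\<^bsub>\<Gamma>\<^esub> (inv\<^bsub>\<Gamma>\<^esub> c y \<otimes>\<^bsub>\<Gamma>\<^esub> a' y \<otimes>\<^bsub>\<Gamma>\<^esub> c x)"
        by (rule grp_alg3[OF assms(1) cc Kc[OF p(2)] Kc[OF q(2)] cc cc])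
      also have "\<dots> = B z"
        unfolding B_def S2p(2)[OF y(1)] T1p(2)[OF y(1)] T2p(2)[OF x] tw_def ..
      finally show "Tw \<Gamma> \<omega> (v \<circ> w) (tw A) z = B z" .
    qed
    have "p \<otimes>\<^bsub>G_grp \<Gamma> w'\<^esub> q = (A, v \<circ> w)"
      unfolding p(1) q(1) A_def S1[symmetric] by (simp add: G_grp_def)
    moreover have "\<Phi> p \<otimes>\<^bsub>G_grp \<Gamma> \<omega>\<^esub> \<Phi> q = (B, v \<circ> w)"
      unfolding p(1) q(1) B_def S21[symmetric] T1_def T2_def \<Phi>_def by (simp add: G_grp_def)
    ultimately show ?thesis using key by (simp add: \<Phi>_def)
  qed
  have hom: "\<Phi> \<in> hom (G_grp \<Gamma> w') (G_grp \<Gamma> \<omega>)"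
    unfolding hom_def using \<Phi>c \<Phi>m by auto
  have inj: "inj_on \<Phi> (carrier (G_grp \<Gamma> w'))"
  proof (rule inj_onI)
    fix p q assume pc: "p \<in> carrier (G_grp \<Gamma> w')" and qc: "q \<in> carrier (G_grp \<Gamma> w')" and e: "\<Phi> p = \<Phi> q"
    obtain a v where p: "p = (a, v)" "a \<in> K_set \<Gamma> w'" "v \<in> thompsonV_set"
      using pc unfolding Gc by blast
    obtain a' w where q: "q = (a', w)" "a' \<in> K_set \<Gamma> w'" "w \<in> thompsonV_set"
      using qc unfolding Gc by blast
    have vw: "w = v" and T: "Tw \<Gamma> \<omega> v (tw a) = Tw \<Gamma> \<omega> v (tw a')"
      using e unfolding p(1) q(1) \<Phi>_def by auto
    have gv: "good v" by (rule V_good[OF p(3)])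
    obtain N where N: "\<forall>z. N \<le> length z \<longrightarrow> (\<exists>y. aff v y z \<and> length z \<le> length y + N)"
      using gv good_def by blast
    have "a = a'"
    proof (rule U[where N=N])
      show "a \<in> K_set \<Gamma> w'" "a' \<in> K_set \<Gamma> w'" using p q by auto
      fix y :: "bool list" assume "N \<le> length y"
      then obtain x where x: "aff v x y" using N by blast
      have "tw a x y = tw a' x y"
        using TwP[OF p(2) gv] TwP[OF q(2) gv] T x by metis
      then show "a y = a' y" unfolding tw_def
        by (rule grp_alg5[OF assms(1) cc Kc[OF p(2)] Kc[OF q(2)] cc])
    qed
    then show "p = q" using p(1) q(1) vw by simp
  qed
  have img: "\<Phi> ` carrier (G_grp \<Gamma> w') = carrier (G_grp \<Gamma> \<omega>)"
  proof
    show "\<Phi> ` carrier (G_grp \<Gamma> w') \<subseteq> carrier (G_grp \<Gamma> \<omega>)" using \<Phi>c by blast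
    show "carrier (G_grp \<Gamma> \<omega>) \<subseteq> \<Phi> ` carrier (G_grp \<Gamma> w')"
    proof
      fix p assume pc: "p \<in> carrier (G_grp \<Gamma> \<omega>)"
      obtain b v where p: "p = (b, v)" "b \<in> K_set \<Gamma> \<omega>" "v \<in> thompsonV_set"
        using pc unfolding Gc by blast
      have gv: "good v" by (rule V_good[OF p(3)])
      define a where "a = Tw \<Gamma> w' v (tu b)"
      have aK: "a \<in> K_set \<Gamma> w'" and ap: "\<And>x y. aff v x y \<Longrightarrow> a y = tu b x y"
        using TuP[OF p(2) gv] unfolding a_def by auto
      have "Tw \<Gamma> \<omega> v (tw a) = b"
      proof (rule TwU[OF aK gv p(2)], intro allI impI)
        fix x y assume xy: "aff v x y"
        show "b y = tw a x y" unfolding tw_def ap[OF xy] tu_def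
          by (rule grp_alg4[OF assms(1) cc Kc[OF p(2)] cc, symmetric])
      qed
      then have "\<Phi> (a, v) = p" unfolding \<Phi>_def p(1) by simp
      moreover have "(a, v) \<in> carrier (G_grp \<Gamma> w')" using aK p(3) by (simp add: G_grp_def)
      ultimately show "p \<in> \<Phi> ` carrier (G_grp \<Gamma> w')" by blast
    qed
  qed
  have "\<Phi> \<in> iso (G_grp \<Gamma> w') (G_grp \<Gamma> \<omega>)"
    unfolding iso_def bij_betw_def using hom inj img by blast
  then show ?thesis unfolding w'_def by (rule is_isoI)
qed

end
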